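(* Let $G$ be a group with a conjugation-closed generating set $X$ and let $g\in\mathrm{Mon}(X)$. If $x_1,\dots,x_n\in\mathrm{Mon}(X)$ satisfy $x_1\cdots x_n=g$ and $\ell(x_1)+\cdots+\ell(x_n)=\ell(g)$, then for any integers $1\le i_1<\cdots<i_k\le n$ we have $x_{i_1}\cdots x_{i_k}\in[1,g]$.
   Context: $\mathrm{Mon}(X)$ is the submonoid of $G$ generated by $X$; for $h\in\mathrm{Mon}(X)$, $\ell(h)$ is the minimal length of a product of elements of $X$ equal to $h$. For $h,g\in\mathrm{Mon}(X)$, $h\le g$ means there is $h'\in\mathrm{Mon}(X)$ with $hh'=g$ and $\ell(h)+\ell(h')=\ell(g)$; $[1,g]=\{h\in\mathrm{Mon}(X):h\le g\}$. *)

theory Defs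
  imports "HOL-Algebra.Algebra"
begin

definition mprod :: "('a, 'b) monoid_scheme \<Rightarrow> 'a list \<Rightarrow> 'a" where
  "mprod M xs = foldr (\<lambda>x y. x \<otimes>\<^bsub>M\<^esub> y) xs \<one>\<^bsub>M\<^esub>"

definition MonX :: "('a, 'b) monoid_scheme \<Rightarrow> 'a set \<Rightarrow> 'a set" where
  "MonX M S = {h. \<exists>xs. set xs \<subseteq> S \<and> mprod M xs = h}"

definition wlen :: "('a, 'b) monoid_scheme \<Rightarrow> 'a set \<Rightarrow> 'a \<Rightarrow> nat" where
  "wlen M S h = (LEAST n. \<exists>xs. set xs \<subseteq> S \<and> mprod M xs = h \<and> length xs = n)"

definition mle :: "('a, 'b) monoid_scheme \<Rightarrow> 'a set \<Rightarrow> 'a \<Rightarrow> 'a \<Rightarrow> bool" where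
  "mle M S h g \<longleftrightarrow> h \<in> MonX M S \<and> g \<in> MonX M S \<and>
     (\<exists>h' \<in> MonX M S. h \<otimes>\<^bsub>M\<^esub> h' = g \<and> wlen M S h + wlen M S h' = wlen M S g)"

definition interval1 :: "('a, 'b) monoid_scheme \<Rightarrow> 'a set \<Rightarrow> 'a \<Rightarrow> 'a set" where
  "interval1 M S g = {h \<in> MonX M S. mle M S h g}"

end

theory Submission
  imports Defs
begin

context group
begin

lemma mprod_append:
  "set xs \<subseteq> carrier G \<Longrightarrow> set ys \<subseteq> carrier G \<Longrightarrow>
   mprod G (xs @ ys) = mprod G xs \<otimes> mprod G ys"
proof (induction xs)
  case Nil
  have "mprod G ys \<in> carrier G" using Nil
    by (induction ys) (auto simp: mprod_def)
  then show ?case by (simp add: mprod_def)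
next
  case (Cons a xs)
  have c: "mprod G zs \<in> carrier G" if "set zs \<subseteq> carrier G" for zs
    using that by (induction zs) (auto simp: mprod_def)
  have "mprod G ((a#xs) @ ys) = a \<otimes> mprod G (xs @ ys)" by (simp add: mprod_def)
  also have "\<dots> = a \<otimes> (mprod G xs \<otimes> mprod G ys)" using Cons by simp
  also have "\<dots> = (a \<otimes> mprod G xs) \<otimes> mprod G ys"
    using Cons.prems c by (simp add: m_assoc)
  finally show ?case by (simp add: mprod_def)
qed

lemma mprod_carrier: "set zs \<subseteq> carrier G \<Longrightarrow> mprod G zs \<in> carrier G"
  by (induction zs) (auto simp: mprod_def)

lemma MonX_carrier: "S \<subseteq> carrier G \<Longrightarrow> MonX G S \<subseteq> carrier G"
  unfolding MonX_def using mprod_carrier by blast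

lemma wlen_ex: "h \<in> MonX G S \<Longrightarrow>
   \<exists>xs. set xs \<subseteq> S \<and> mprod G xs = h \<and> length xs = wlen G S h"
  unfolding MonX_def wlen_def
  by (rule LeastI_ex) auto

lemma wlen_le: "set xs \<subseteq> S \<Longrightarrow> mprod G xs = h \<Longrightarrow> wlen G S h \<le> length xs"
  unfolding wlen_def by (rule Least_le) auto

lemma one_MonX: "\<one> \<in> MonX G S"
  unfolding MonX_def by (rule CollectI, rule exI[of _ "[]"]) (simp add: mprod_def)

lemma mult_MonX:
  assumes S: "S \<subseteq> carrier G" and a: "a \<in> MonX G S" and b: "b \<in> MonX G S"
  shows "a \<otimes> b \<in> MonX G S \<and> wlen G S (a \<otimes> b) \<le> wlen G S a + wlen G S b"
proof -
  obtain as where as: "set as \<subseteq> S" "mprod G as = a" "length as = wlen G S a"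
    using wlen_ex[OF a] by blast
  obtain bs where bs: "set bs \<subseteq> S" "mprod G bs = b" "length bs = wlen G S b"
    using wlen_ex[OF b] by blast
  have e: "mprod G (as @ bs) = a \<otimes> b"
    using mprod_append[of as bs] as bs S by auto
  have "set (as @ bs) \<subseteq> S" using as bs by auto
  then show ?thesis using e wlen_le[of "as @ bs" S "a \<otimes> b"] as bs
    unfolding MonX_def by (metis (mono_tags, lifting) length_append mem_Collect_eq)
qed

lemma conj_MonX:
  assumes S: "S \<subseteq> carrier G"
    and cl: "\<And>x y. x \<in> S \<Longrightarrow> y \<in> carrier G \<Longrightarrow> y \<otimes> x \<otimes> inv y \<in> S"
    and a: "a \<in> MonX G S" and c: "c \<in> carrier G"
  shows "c \<otimes> a \<otimes> inv c \<in> MonX G S \<and> wlen G S (c \<otimes> a \<otimes> inv c) \<le> wlen G S a"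
proof -
  obtain as where as: "set as \<subseteq> S" "mprod G as = a" "length as = wlen G S a"
    using wlen_ex[OF a] by blast
  have m: "set zs \<subseteq> S \<Longrightarrow> mprod G (map (\<lambda>s. c \<otimes> s \<otimes> inv c) zs) = c \<otimes> mprod G zs \<otimes> inv c" for zs
  proof (induction zs)
    case Nil then show ?case using c by (simp add: mprod_def)
  next
    case (Cons z zs)
    have z: "z \<in> carrier G" using Cons.prems S by auto
    have zs: "mprod G zs \<in> carrier G" using Cons.prems S mprod_carrier by auto
    have "mprod G (map (\<lambda>s. c \<otimes> s \<otimes> inv c) (z#zs)) = (c \<otimes> z \<otimes> inv c) \<otimes> (c \<otimes> mprod G zs \<otimes> inv c)"
      using Cons by (simp add: mprod_def)
    also have "\<dots> = c \<otimes> (z \<otimes> mprod G zs) \<otimes> inv c"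
      using z zs c by (simp add: m_assoc r_inv_ex l_inv  flip: m_assoc) (simp add: m_assoc)
    finally show ?case by (simp add: mprod_def)
  qed
  have s: "set (map (\<lambda>s. c \<otimes> s \<otimes> inv c) as) \<subseteq> S" using as cl c by auto
  have "c \<otimes> a \<otimes> inv c \<in> MonX G S" unfolding MonX_def
    using m[OF as(1)] s as(2) by blast
  then show ?thesis using m[OF as(1)] s wlen_le[OF s] as by auto
qed

lemma list_MonX:
  assumes S: "S \<subseteq> carrier G" and xs: "set xs \<subseteq> MonX G S"
  shows "mprod G xs \<in> MonX G S \<and> wlen G S (mprod G xs) \<le> (\<Sum>x\<leftarrow>xs. wlen G S x)"
  using xs
proof (induction xs)
  case Nil
  have "wlen G S \<one> = 0" using wlen_le[of "[]" S \<one>] by (simp add: mprod_def)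
  then show ?case using one_MonX by (simp add: mprod_def)
next
  case (Cons a xs)
  then have a: "a \<in> MonX G S" and IH: "mprod G xs \<in> MonX G S"
     "wlen G S (mprod G xs) \<le> (\<Sum>x\<leftarrow>xs. wlen G S x)" by auto
  show ?case using mult_MonX[OF S a IH(1)] IH(2) by (auto simp: mprod_def)
qed

lemma sum_split: "(\<Sum>x\<leftarrow>nths xs I. f x) + (\<Sum>x\<leftarrow>nths xs (-I). f x) = (\<Sum>x\<leftarrow>xs. (f x::nat))"
proof (induction xs arbitrary: I)
  case Nil then show ?case by simp
next
  case (Cons a xs)
  have "{j. Suc j \<in> - I} = - {j. Suc j \<in> I}" by auto
  then show ?case using Cons[of "{j. Suc j \<in> I}"] by (auto simp: nths_Cons)
qed

lemma main_gen:
  assumes S: "S \<subseteq> carrier G"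
    and cl: "\<And>x y. x \<in> S \<Longrightarrow> y \<in> carrier G \<Longrightarrow> y \<otimes> x \<otimes> inv y \<in> S"
    and xs: "set xs \<subseteq> MonX G S"
  shows "\<exists>h'. h' \<in> MonX G S \<and> mprod G xs = mprod G (nths xs I) \<otimes> h' \<and>
     wlen G S h' \<le> (\<Sum>x\<leftarrow>nths xs (-I). wlen G S x)"
  using xs
proof (induction xs arbitrary: I)
  case Nil
  have "wlen G S \<one> = 0" using wlen_le[of "[]" S \<one>] by (simp add: mprod_def)
  then show ?case using one_MonX by (intro exI[of _ \<one>]) (simp add: mprod_def)
next
  case (Cons a xs)
  define J where "J = {j. Suc j \<in> I}"
  have a: "a \<in> MonX G S" and xsM: "set xs \<subseteq> MonX G S" using Cons.prems by auto
  obtain h' where h': "h' \<in> MonX G S" "mprod G xs = mprod G (nths xs J) \<otimes> h'"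
    "wlen G S h' \<le> (\<Sum>x\<leftarrow>nths xs (-J). wlen G S x)"
    using Cons.IH[OF xsM] by blast
  have cJ: "{j. Suc j \<in> - I} = - J" unfolding J_def by auto
  have MC: "MonX G S \<subseteq> carrier G" using MonX_carrier[OF S] .
  have sub: "set (nths xs J) \<subseteq> MonX G S" using xsM set_nths_subset[of xs J] by blast
  have YM: "mprod G (nths xs J) \<in> MonX G S" using list_MonX[OF S sub] by blast
  define Y where "Y = mprod G (nths xs J)"
  have Yc: "Y \<in> carrier G" using YM MC Y_def by auto
  have ac: "a \<in> carrier G" using a MC by auto
  have hc: "h' \<in> carrier G" using h' MC by auto
  show ?case
  proof (cases "0 \<in> I")
    case True
    have "mprod G (a#xs) = a \<otimes> (Y \<otimes> h')" using h' Y_def by (simp add: mprod_def)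
    also have "\<dots> = mprod G (nths (a#xs) I) \<otimes> h'"
      using True ac Yc hc by (simp add: nths_Cons J_def[symmetric] Y_def mprod_def m_assoc)
    finally show ?thesis using h' True cJ
      by (intro exI[of _ h']) (simp add: nths_Cons)
  next
    case False
    define c where "c = inv Y \<otimes> a \<otimes> Y"
    have cc: "inv Y \<otimes> a \<otimes> inv (inv Y) \<in> MonX G S \<and> wlen G S (inv Y \<otimes> a \<otimes> inv (inv Y)) \<le> wlen G S a"
      using conj_MonX[OF S cl a, of "inv Y"] Yc by auto
    then have cM: "c \<in> MonX G S" and cw: "wlen G S c \<le> wlen G S a"
      using Yc by (auto simp: c_def)
    note m2 = mult_MonX[OF S cM h'(1)]
    have "mprod G (a#xs) = a \<otimes> (Y \<otimes> h')" using h' Y_def by (simp add: mprod_def)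
    also have "\<dots> = Y \<otimes> (c \<otimes> h')"
      using ac Yc hc unfolding c_def
      by (simp add: m_assoc r_inv_ex flip: m_assoc)
    also have "\<dots> = mprod G (nths (a#xs) I) \<otimes> (c \<otimes> h')"
      using False by (simp add: nths_Cons J_def[symmetric] Y_def)
    finally show ?thesis using m2 cw h' False cJ
      by (intro exI[of _ "c \<otimes> h'"]) (auto simp: nths_Cons)
  qed
qed

end

theorem lemma2p4:
  fixes G (structure) and S :: "'a set" and g :: 'a and xs :: "'a list" and I :: "nat set"
  assumes "group G"
    and "S \<subseteq> carrier G"
    and "generate G S = carrier G"
    and "\<And>x y. x \<in> S \<Longrightarrow> y \<in> carrier G \<Longrightarrow> y \<otimes> x \<otimes> inv y \<in> S"
    and "g \<in> MonX G S"
    and "set xs \<subseteq> MonX G S"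
    and "mprod G xs = g"
    and "(\<Sum>x\<leftarrow>xs. wlen G S x) = wlen G S g"
    and "I \<subseteq> {..<length xs}" and "I \<noteq> {}"
  shows "mprod G (nths xs I) \<in> interval1 G S g"
proof -
  interpret group G by fact
  obtain h' where h': "h' \<in> MonX G S" "mprod G xs = mprod G (nths xs I) \<otimes> h'"
     "wlen G S h' \<le> (\<Sum>x\<leftarrow>nths xs (-I). wlen G S x)"
    using main_gen[OF assms(2) assms(4) assms(6)] by blast
  have sub: "set (nths xs I) \<subseteq> MonX G S" using assms(6) set_nths_subset[of xs I] by blast
  note y = list_MonX[OF assms(2) sub]
  have tri: "wlen G S g \<le> wlen G S (mprod G (nths xs I)) + wlen G S h'"
    using mult_MonX[OF assms(2) y[THEN conjunct1] h'(1)] h'(2) assms(7) by simp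
  have eq: "wlen G S (mprod G (nths xs I)) + wlen G S h' = wlen G S g"
    using tri y h'(3) sum_split[of "wlen G S" xs I] assms(8) by linarith
  show ?thesis unfolding interval1_def mle_def
    using y h' eq assms(5,7) by auto
qed

end
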